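(* Let $E: y^2=x^3+Ax+B$ ($A,B\in\mathbb{Z}$) be an elliptic curve over $\mathbb{Q}$ and let $M$ be a positive integer with $\max\{10\sqrt{|A|},5\sqrt[3]{|B|}\}\le M$. There exists $D_0$ depending only on $E$ (and $M$) such that for every squarefree integer $D\ge D_0$ and every point $P\in E_D(\mathbb{Z})$ with $x(P)\le MD$, where $E_D: y^2=x^3+D^2Ax+D^3B$, we have $\hat h(P)<1.5\log D$.
   Context: $h$ is the absolute logarithmic Weil height on $\overline{\mathbb{Q}}$; for a point $P$ on an elliptic curve in Weierstrass form, $\hat h(P)=\lim_{n\to\infty} h(x(2^nP))/4^n$ (the canonical height, not normalized by the factor $1/2$). $E_D(\mathbb{Z})$ is the set of points of $E_D$ with integer coordinates. *)

theory Defs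
  imports Complex_Main "HOL-Computational_Algebra.Squarefree"
begin

definition weil_height_rat :: "rat \<Rightarrow> real" where
  "weil_height_rat r = (case quotient_of r of (p, q) \<Rightarrow> ln (real_of_int (max \<bar>p\<bar> \<bar>q\<bar>)))"

text \<open>x-coordinate of 2P on y^2 = x^3 + a x + b in terms of x = x(P);
  None encodes the point at infinity O.\<close>
definition x_double :: "rat \<Rightarrow> rat \<Rightarrow> rat \<Rightarrow> rat option" where
  "x_double a b x = (if x^3 + a*x + b = 0 then None
     else Some ((x^4 - 2*a*x^2 - 8*b*x + a^2) / (4*(x^3 + a*x + b))))"

fun x_iter :: "rat \<Rightarrow> rat \<Rightarrow> nat \<Rightarrow> rat \<Rightarrow> rat option" where
  "x_iter a b 0 x = Some x"
| "x_iter a b (Suc n) x = Option.bind (x_iter a b n x) (x_double a b)"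

definition height_opt :: "rat option \<Rightarrow> real" where
  "height_opt p = (case p of None \<Rightarrow> 0 | Some r \<Rightarrow> weil_height_rat r)"

text \<open>Canonical height (not normalised by 1/2) of an affine point with x-coordinate x
  on y^2 = x^3 + a x + b: lim h(x(2^n P)) / 4^n.\<close>
definition canonical_height :: "rat \<Rightarrow> rat \<Rightarrow> rat \<Rightarrow> real" where
  "canonical_height a b x = lim (\<lambda>n. height_opt (x_iter a b n x) / 4 ^ n)"

end

theory Submission
  imports Defs
begin

lemma wh_gcd:
  fixes p q :: int
  assumes "q \<noteq> 0"
  shows "weil_height_rat (of_int p / of_int q) = ln (real_of_int (max \<bar>p\<bar> \<bar>q\<bar>)) - ln (real_of_int (gcd p q))"
proof -
  obtain p' q' where pq: "quotient_of (of_int p / of_int q) = (p', q')" by (cases "quotient_of (of_int p / of_int q :: rat)") auto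
  have q'pos: "q' > 0" using quotient_of_denom_pos[OF pq] .
  have cop: "coprime p' q'" using quotient_of_coprime[OF pq] .
  have eq: "(of_int p / of_int q :: rat) = of_int p' / of_int q'" using quotient_of_div[OF pq] .
  have eq2: "p' * q = p * q'"
  proof -
    have "(of_int p' :: rat) * of_int q = of_int p * of_int q'" using eq assms q'pos
      by (simp add: field_simps)
    then show ?thesis by (metis of_int_eq_iff of_int_mult)
  qed
  have "q' dvd p' * q" using eq2 by simp
  then have "q' dvd q" using cop by (metis coprime_commute coprime_dvd_mult_right_iff)
  then obtain k where k: "q = q' * k" by blast
  have "q' * p = q' * (p' * k)" using eq2 k by (metis mult.commute mult.left_commute)
  then have kp: "p = p' * k" using q'pos by simp
  have knz: "k \<noteq> 0" using k assms by auto
  have g: "gcd p q = \<bar>k\<bar>" 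
  proof -
    have "gcd p q = gcd (p' * k) (q' * k)" using kp k by simp
    also have "\<dots> = gcd p' q' * \<bar>k\<bar>" by (simp add: gcd_mult_right abs_mult gcd.commute)
    finally show ?thesis using cop by simp
  qed
  have m: "max \<bar>p\<bar> \<bar>q\<bar> = \<bar>k\<bar> * max \<bar>p'\<bar> q'"
  proof -
    have "max \<bar>p\<bar> \<bar>q\<bar> = max (\<bar>k\<bar> * \<bar>p'\<bar>) (\<bar>k\<bar> * q')" using kp k q'pos by (simp add: abs_mult mult.commute)
    also have "\<dots> = \<bar>k\<bar> * max \<bar>p'\<bar> q'" by (simp add: max_mult_distrib_left)
    finally show ?thesis .
  qed
  have "weil_height_rat (of_int p / of_int q) = ln (real_of_int (max \<bar>p'\<bar> q'))"
    unfolding weil_height_rat_def pq using q'pos by simp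
  moreover have "ln (real_of_int (max \<bar>p\<bar> \<bar>q\<bar>)) = ln (real_of_int \<bar>k\<bar>) + ln (real_of_int (max \<bar>p'\<bar> q'))"
    unfolding m using knz q'pos by (simp add: ln_mult)
  ultimately show ?thesis using g by simp
qed

lemma wh_le:
  fixes p q :: int
  assumes "q \<noteq> 0"
  shows "weil_height_rat (of_int p / of_int q) \<le> ln (real_of_int (max \<bar>p\<bar> \<bar>q\<bar>))"
proof -
  have "gcd p q \<noteq> 0" using assms by simp
  then have "gcd p q \<ge> 1" by (smt (verit) gcd_ge_0_int)
  then have "ln (real_of_int (gcd p q)) \<ge> 0" by simp
  then show ?thesis using wh_gcd[OF assms, of p] by linarith
qed

lemma wh_quot:
  assumes "quotient_of r = (p, q)"
  shows "weil_height_rat r = ln (real_of_int (max \<bar>p\<bar> q))"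
  using assms quotient_of_denom_pos[OF assms] unfolding weil_height_rat_def by simp

lemma wh_nonneg: "weil_height_rat r \<ge> 0"
proof -
  obtain p q where pq: "quotient_of r = (p, q)" by (cases "quotient_of r") auto
  have "q > 0" using quotient_of_denom_pos[OF pq] .
  then have "max \<bar>p\<bar> q \<ge> 1" by simp
  then show ?thesis using wh_quot[OF pq] by simp
qed

lemma ln_mono_int:
  fixes X Y :: int assumes "0 < X" "X \<le> Y"
  shows "ln (real_of_int X) \<le> ln (real_of_int Y)"
  using assms by (subst ln_le_cancel_iff) auto

lemma h_scale1:
  fixes D :: int assumes "D > 0"
  shows "weil_height_rat (of_int D * r) \<le> ln (real_of_int D) + weil_height_rat r"
proof -
  obtain p q where pq: "quotient_of r = (p, q)" by (cases "quotient_of r") auto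
  have qpos: "q > 0" using quotient_of_denom_pos[OF pq] .
  have r: "r = of_int p / of_int q" using quotient_of_div[OF pq] .
  have "of_int D * r = of_int (D * p) / of_int q" using r by simp
  then have "weil_height_rat (of_int D * r) \<le> ln (real_of_int (max \<bar>D * p\<bar> \<bar>q\<bar>))"
    using wh_le[of q "D*p"] qpos by simp
  also have "max \<bar>D * p\<bar> \<bar>q\<bar> \<le> D * max \<bar>p\<bar> q"
    using assms qpos by (auto simp: abs_mult max_def mult_left_mono) (smt (verit) mult_le_cancel_right1)+
  then have "ln (real_of_int (max \<bar>D * p\<bar> \<bar>q\<bar>)) \<le> ln (real_of_int (D * max \<bar>p\<bar> q))"
    using qpos by (intro ln_mono_int) auto
  also have "\<dots> = ln (real_of_int D) + weil_height_rat r"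
    using wh_quot[OF pq] assms qpos by (simp add: ln_mult)
  finally show ?thesis .
qed

lemma h_scale2:
  fixes D :: int assumes "D > 0"
  shows "weil_height_rat r \<le> ln (real_of_int D) + weil_height_rat (of_int D * r)"
proof -
  obtain p q where pq: "quotient_of (of_int D * r) = (p, q)" by (cases "quotient_of (of_int D * r)") auto
  have qpos: "q > 0" using quotient_of_denom_pos[OF pq] .
  have r: "of_int D * r = of_int p / of_int q" using quotient_of_div[OF pq] .
  have "r = (of_int D * r) / of_int D" using assms by simp
  then have "r = of_int p / of_int (D * q)" using r assms by simp
  then have "weil_height_rat r \<le> ln (real_of_int (max \<bar>p\<bar> \<bar>D * q\<bar>))"
    using wh_le[of "D * q" p] qpos assms by simp
  also have "max \<bar>p\<bar> \<bar>D * q\<bar> \<le> D * max \<bar>p\<bar> q"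
    using assms qpos by (auto simp: abs_mult max_def mult_left_mono) (smt (verit) mult_le_cancel_right1)+
  then have "ln (real_of_int (max \<bar>p\<bar> \<bar>D * q\<bar>)) \<le> ln (real_of_int (D * max \<bar>p\<bar> q))"
    using qpos assms by (intro ln_mono_int) (auto simp: abs_mult less_max_iff_disj)
  also have "\<dots> = ln (real_of_int D) + weil_height_rat (of_int D * r)"
    using wh_quot[OF pq] assms qpos by (simp add: ln_mult)
  finally show ?thesis .
qed

lemma xd_scale:
  fixes D :: rat assumes "D \<noteq> 0"
  shows "x_double (D^2*a) (D^3*b) (D*r) = map_option ((*) D) (x_double a b r)"
proof -
  have e: "(D*r)^3 + D^2*a*(D*r) + D^3*b = D^3 * (r^3 + a*r + b)" by (simp add: algebra_simps power3_eq_cube power2_eq_square)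
  have n: "(D*r)^4 - 2*(D^2*a)*(D*r)^2 - 8*(D^3*b)*(D*r) + (D^2*a)^2 = D^4 * (r^4 - 2*a*r^2 - 8*b*r + a^2)"
    by (simp add: algebra_simps power2_eq_square power3_eq_cube power4_eq_xxxx)
  show ?thesis
  proof (cases "r^3 + a*r + b = 0")
    case True then show ?thesis unfolding x_double_def e by simp
  next
    case False
    have aux: "D^4 * N / (4 * (D^3 * Y)) = D * (N / (4*Y))" if "Y \<noteq> 0" for N Y :: rat
      using that assms by (simp add: field_simps power4_eq_xxxx power3_eq_cube)
    have "D^4 * (r^4 - 2*a*r^2 - 8*b*r + a^2) / (4 * (D^3 * (r^3 + a*r + b)))
       = D * ((r^4 - 2*a*r^2 - 8*b*r + a^2) / (4*(r^3 + a*r + b)))"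
      by (rule aux[OF False])
    then show ?thesis using False assms unfolding x_double_def e n by simp
  qed
qed

lemma xi_scale:
  fixes D :: rat assumes "D \<noteq> 0"
  shows "x_iter (D^2*a) (D^3*b) n (D*r) = map_option ((*) D) (x_iter a b n r)"
proof (induction n)
  case 0 then show ?case by simp
next
  case (Suc n) then show ?case
    by (cases "x_iter a b n r") (simp_all add: xd_scale[OF assms])
qed

lemma tate_limit:
  fixes H :: "nat \<Rightarrow> real"
  assumes "\<And>n. \<bar>H (Suc n) - 4 * H n\<bar> \<le> C"
  shows "\<exists>L. (\<lambda>n. H n / 4^n) \<longlonglongrightarrow> L \<and> L \<le> H 0 + C / 3"
proof -
  define d where "d n = H (Suc n) / 4^(Suc n) - H n / 4^n" for n
  have dle: "\<bar>d n\<bar> \<le> C/4 * (1/4)^n" for n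
  proof -
    have "d n = (H (Suc n) - 4 * H n) / 4^(Suc n)" unfolding d_def by (simp add: field_simps)
    then have "\<bar>d n\<bar> = \<bar>H (Suc n) - 4 * H n\<bar> / 4^(Suc n)" by simp
    also have "\<dots> \<le> C / 4^(Suc n)" using assms[of n] by (simp add: divide_right_mono)
    also have "\<dots> = C/4 * (1/4)^n" by (simp add: power_divide field_simps)
    finally show ?thesis .
  qed
  have sg: "summable (\<lambda>n. C/4 * (1/4::real)^n)" by (intro summable_mult summable_geometric) simp
  have sd: "summable d" using dle by (intro summable_comparison_test'[OF sg, of 0]) auto
  have tel: "H n / 4^n = H 0 + (\<Sum>k<n. d k)" for n
    unfolding d_def by (induction n) auto
  have "(\<lambda>n. H 0 + (\<Sum>k<n. d k)) \<longlonglongrightarrow> H 0 + suminf d"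
    by (intro tendsto_add tendsto_const summable_LIMSEQ sd)
  then have lim: "(\<lambda>n. H n / 4^n) \<longlonglongrightarrow> H 0 + suminf d" using tel by simp
  have dle2: "d n \<le> C/4 * (1/4)^n" for n using dle[of n] by linarith
  have "suminf d \<le> (\<Sum>n. C/4 * (1/4::real)^n)"
    using dle2 sd sg by (intro suminf_le) auto
  also have "\<dots> = C/3" using suminf_mult[of "\<lambda>n. (1/4::real)^n" "C/4"] suminf_geometric[of "1/4::real"]
    by simp
  finally show ?thesis using lim by auto
qed

lemma mono_bound:
  fixes p q m c :: int
  assumes "\<bar>p\<bar> \<le> m" "\<bar>q\<bar> \<le> m"
  shows "\<bar>c * p^i * q^j\<bar> \<le> \<bar>c\<bar> * m^(i+j)"
proof -
  have "\<bar>p\<bar>^i \<le> m^i" by (rule power_mono[OF assms(1)]) simp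
  moreover have "\<bar>q\<bar>^j \<le> m^j" by (rule power_mono[OF assms(2)]) simp
  ultimately have "\<bar>p\<bar>^i * \<bar>q\<bar>^j \<le> m^i * m^j"
    using order_trans[OF abs_ge_zero assms(1)] by (intro mult_mono) auto
  then have "\<bar>c\<bar> * (\<bar>p\<bar>^i * \<bar>q\<bar>^j) \<le> \<bar>c\<bar> * (m^i * m^j)" by (intro mult_left_mono) auto
  then show ?thesis by (simp add: abs_mult power_abs power_add mult.assoc)
qed

lemma abs4: "\<bar>x1 + x2 + x3 + x4\<bar> \<le> \<bar>x1\<bar> + \<bar>x2\<bar> + \<bar>x3\<bar> + \<bar>(x4::int)\<bar>"
  by (smt (verit) abs_triangle_ineq)

lemma abs5: "\<bar>x0 + x1 + x2 + x3 + x4\<bar> \<le> \<bar>x0\<bar> + \<bar>x1\<bar> + \<bar>x2\<bar> + \<bar>x3\<bar> + \<bar>(x4::int)\<bar>"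
  by (smt (verit) abs_triangle_ineq)

lemma cubic_bound:
  fixes p q m c1 c2 c3 c4 :: int
  assumes "\<bar>p\<bar> \<le> m" "\<bar>q\<bar> \<le> m"
  shows "\<bar>c1 * p^3 + c2 * p^2 * q + c3 * p * q^2 + c4 * q^3\<bar> \<le> (\<bar>c1\<bar>+\<bar>c2\<bar>+\<bar>c3\<bar>+\<bar>c4\<bar>) * m^3"
proof -
  have "\<bar>c1 * p^3\<bar> \<le> \<bar>c1\<bar> * m^3" using mono_bound[OF assms, of c1 3 0] by (simp add: eval_nat_numeral)
  moreover have "\<bar>c2 * p^2 * q\<bar> \<le> \<bar>c2\<bar> * m^3" using mono_bound[OF assms, of c2 2 1] by (simp add: eval_nat_numeral)
  moreover have "\<bar>c3 * p * q^2\<bar> \<le> \<bar>c3\<bar> * m^3" using mono_bound[OF assms, of c3 1 2] by (simp add: eval_nat_numeral)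
  moreover have "\<bar>c4 * q^3\<bar> \<le> \<bar>c4\<bar> * m^3" using mono_bound[OF assms, of c4 0 3] by (simp add: eval_nat_numeral)
  moreover have "(\<bar>c1\<bar>+\<bar>c2\<bar>+\<bar>c3\<bar>+\<bar>c4\<bar>) * m^3 = \<bar>c1\<bar>*m^3+\<bar>c2\<bar>*m^3+\<bar>c3\<bar>*m^3+\<bar>c4\<bar>*m^3" by (simp add: distrib_right)
  moreover note abs4[of "c1 * p^3" "c2 * p^2 * q" "c3 * p * q^2" "c4 * q^3"]
  ultimately show ?thesis by linarith
qed

lemma quartic_bound:
  fixes p q m c0 c1 c2 c3 c4 :: int
  assumes "\<bar>p\<bar> \<le> m" "\<bar>q\<bar> \<le> m"
  shows "\<bar>c0 * p^4 + c1 * p^3 * q + c2 * p^2 * q^2 + c3 * p * q^3 + c4 * q^4\<bar> \<le> (\<bar>c0\<bar>+\<bar>c1\<bar>+\<bar>c2\<bar>+\<bar>c3\<bar>+\<bar>c4\<bar>) * m^4"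
proof -
  have "\<bar>c0 * p^4\<bar> \<le> \<bar>c0\<bar> * m^4" using mono_bound[OF assms, of c0 4 0] by (simp add: eval_nat_numeral)
  moreover have "\<bar>c1 * p^3 * q\<bar> \<le> \<bar>c1\<bar> * m^4" using mono_bound[OF assms, of c1 3 1] by (simp add: eval_nat_numeral)
  moreover have "\<bar>c2 * p^2 * q^2\<bar> \<le> \<bar>c2\<bar> * m^4" using mono_bound[OF assms, of c2 2 2] by (simp add: eval_nat_numeral)
  moreover have "\<bar>c3 * p * q^3\<bar> \<le> \<bar>c3\<bar> * m^4" using mono_bound[OF assms, of c3 1 3] by (simp add: eval_nat_numeral)
  moreover have "\<bar>c4 * q^4\<bar> \<le> \<bar>c4\<bar> * m^4" using mono_bound[OF assms, of c4 0 4] by (simp add: eval_nat_numeral)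
  moreover have "(\<bar>c0\<bar>+\<bar>c1\<bar>+\<bar>c2\<bar>+\<bar>c3\<bar>+\<bar>c4\<bar>) * m^4 = \<bar>c0\<bar>*m^4+\<bar>c1\<bar>*m^4+\<bar>c2\<bar>*m^4+\<bar>c3\<bar>*m^4+\<bar>c4\<bar>*m^4" by (simp add: distrib_right)
  moreover note abs5[of "c0 * p^4" "c1 * p^3 * q" "c2 * p^2 * q^2" "c3 * p * q^3" "c4 * q^4"]
  ultimately show ?thesis by linarith
qed

lemma ident1:
  fixes a b p q :: int
  shows "(0 * p^3 + 12 * p^2 * q + 0 * p * q^2 + 16*a * q^3) *
           (1 * p^4 + 0 * p^3 * q + (-2*a) * p^2 * q^2 + (-8*b) * p * q^3 + a^2 * q^4)
       - (3 * p^3 + 0 * p^2 * q + (-5*a) * p * q^2 + (-27*b) * q^3) *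
           (0 * p^4 + 4 * p^3 * q + 0 * p^2 * q^2 + (4*a) * p * q^3 + (4*b) * q^4)
       = 4 * (4*a^3 + 27*b^2) * q^7"
  by algebra

lemma ident2:
  fixes a b p q :: int
  shows "(4*(4*a^3+27*b^2) * p^3 + (-4*a^2*b) * p^2 * q + (4*a*(3*a^3+22*b^2)) * p * q^2 + (12*b*(a^3+8*b^2)) * q^3) *
           (1 * p^4 + 0 * p^3 * q + (-2*a) * p^2 * q^2 + (-8*b) * p * q^3 + a^2 * q^4)
       + ((a^2*b) * p^3 + (a*(5*a^3+32*b^2)) * p^2 * q + (2*b*(13*a^3+96*b^2)) * p * q^2 + (-3*a^2*(a^3+8*b^2)) * q^3) *
           (0 * p^4 + 4 * p^3 * q + 0 * p^2 * q^2 + (4*a) * p * q^3 + (4*b) * q^4)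
       = 4 * (4*a^3 + 27*b^2) * p^7"
  by algebra

lemma ln_int_mult:
  fixes X Y :: int assumes "0 < X" "0 < Y"
  shows "ln (real_of_int (X * Y)) = ln (real_of_int X) + ln (real_of_int Y)"
  using assms by (simp add: ln_mult)

lemma ln_int_pow:
  fixes X :: int assumes "0 < X"
  shows "ln (real_of_int (X ^ n)) = real n * ln (real_of_int X)"
  using assms by (simp add: ln_realpow)

lemma root_case:
  fixes a b p q :: int
  assumes q: "q > 0" and cop: "coprime p q" and Y: "p^3 + a*p*q^2 + b*q^3 = 0"
  shows "max \<bar>p\<bar> q \<le> \<bar>a\<bar> + \<bar>b\<bar> + 1"
proof -
  have "p^3 = q * (-(a*p*q + b*q^2))" using Y by (simp add: algebra_simps power2_eq_square power3_eq_cube)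
  then have "q dvd p^3" by (metis dvd_triv_left)
  moreover have "coprime (p^3) q" using cop by simp
  ultimately have "is_unit q" by (metis coprime_absorb_left coprime_commute)
  then have q1: "q = 1" using q by simp
  have Y1: "p^3 = -(a*p + b)" using Y q1 by simp
  have "\<bar>p\<bar> \<le> \<bar>a\<bar> + \<bar>b\<bar>"
  proof (cases "p = 0")
    case True then show ?thesis by simp
  next
    case False
    then have p1: "\<bar>p\<bar> \<ge> 1" by linarith
    have "\<bar>p\<bar>^3 = \<bar>a*p + b\<bar>" using Y1 by (metis abs_minus_cancel power_abs)
    also have "\<dots> \<le> \<bar>a\<bar>*\<bar>p\<bar> + \<bar>b\<bar>" by (metis abs_mult abs_triangle_ineq)
    also have "\<dots> \<le> \<bar>a\<bar>*\<bar>p\<bar> + \<bar>b\<bar>*\<bar>p\<bar>" using p1 by (simp add: mult_le_cancel_left1)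
    finally have "\<bar>p\<bar> * \<bar>p\<bar>^2 \<le> \<bar>p\<bar> * (\<bar>a\<bar> + \<bar>b\<bar>)" by (simp add: power3_eq_cube power2_eq_square algebra_simps)
    then have "\<bar>p\<bar>^2 \<le> \<bar>a\<bar> + \<bar>b\<bar>" using p1 by (metis mult_le_cancel_left_pos zero_less_one order_less_le_trans)
    moreover have "\<bar>p\<bar> * 1 \<le> \<bar>p\<bar> * \<bar>p\<bar>" using p1 by (intro mult_left_mono) auto
    then have "\<bar>p\<bar> \<le> \<bar>p\<bar>^2" by (simp add: power2_eq_square)
    ultimately show ?thesis by linarith
  qed
  then show ?thesis using q1 by simp
qed

lemma some_case:
  fixes a b p q :: int and Kup Klo :: int
  assumes Delta: "4*a^3 + 27*b^2 \<noteq> 0"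
    and q: "q > 0" and cop: "coprime p q" and Y: "p^3 + a*p*q^2 + b*q^3 \<noteq> 0"
    and Kup: "Kup = (\<bar>1\<bar>+\<bar>0\<bar>+\<bar>-2*a\<bar>+\<bar>-8*b\<bar>+\<bar>a^2\<bar>) + (\<bar>0\<bar>+\<bar>4\<bar>+\<bar>0\<bar>+\<bar>4*a\<bar>+\<bar>4*b\<bar>)"
    and Klo: "Klo = (\<bar>0\<bar>+\<bar>12\<bar>+\<bar>0\<bar>+\<bar>16*a\<bar>) + (\<bar>3\<bar>+\<bar>0\<bar>+\<bar>-5*a\<bar>+\<bar>-27*b\<bar>)
       + (\<bar>4*(4*a^3+27*b^2)\<bar> + \<bar>-4*a^2*b\<bar> + \<bar>4*a*(3*a^3+22*b^2)\<bar> + \<bar>12*b*(a^3+8*b^2)\<bar>)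
       + (\<bar>a^2*b\<bar> + \<bar>a*(5*a^3+32*b^2)\<bar> + \<bar>2*b*(13*a^3+96*b^2)\<bar> + \<bar>-3*a^2*(a^3+8*b^2)\<bar>) + 1"
  defines "F \<equiv> 1 * p^4 + 0 * p^3 * q + (-2*a) * p^2 * q^2 + (-8*b) * p * q^3 + a^2 * q^4"
    and "G \<equiv> 0 * p^4 + 4 * p^3 * q + 0 * p^2 * q^2 + (4*a) * p * q^3 + (4*b) * q^4"
  shows "\<bar>weil_height_rat (of_int F / of_int G) - 4 * ln (real_of_int (max \<bar>p\<bar> q))\<bar>
          \<le> ln (real_of_int Kup) + ln (real_of_int Klo)"
proof -
  define m where "m = max \<bar>p\<bar> q"
  have m1: "m \<ge> 1" "\<bar>p\<bar> \<le> m" "\<bar>q\<bar> \<le> m" using q unfolding m_def by auto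
  have GY: "G = 4 * q * (p^3 + a*p*q^2 + b*q^3)" unfolding G_def by (simp add: algebra_simps power2_eq_square power3_eq_cube power4_eq_xxxx)
  have G0: "G \<noteq> 0" using GY q Y by simp
  define MF where "MF = max \<bar>F\<bar> \<bar>G\<bar>"
  have MF0: "MF > 0" using G0 unfolding MF_def by (simp add: less_max_iff_disj)
  have Kup1: "Kup \<ge> 1" using Kup by simp
  have Klo1: "Klo \<ge> 1" using Klo by simp
  have bF: "\<bar>F\<bar> \<le> (\<bar>1\<bar>+\<bar>0\<bar>+\<bar>-2*a\<bar>+\<bar>-8*b\<bar>+\<bar>a^2\<bar>) * m^4"
    unfolding F_def by (rule quartic_bound[OF m1(2,3)])
  have bG: "\<bar>G\<bar> \<le> (\<bar>0\<bar>+\<bar>4\<bar>+\<bar>0\<bar>+\<bar>4*a\<bar>+\<bar>4*b\<bar>) * m^4"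
    unfolding G_def by (rule quartic_bound[OF m1(2,3)])
  have MFup: "MF \<le> Kup * m^4"
  proof -
    have "0 \<le> m^4" using m1 by simp
    then have "\<bar>F\<bar> \<le> Kup * m^4" "\<bar>G\<bar> \<le> Kup * m^4" using bF bG unfolding Kup
      by (smt (verit) mult_right_mono abs_ge_zero)+
    then show ?thesis unfolding MF_def by simp
  qed
  have hs_le: "weil_height_rat (of_int F / of_int G) \<le> ln (real_of_int MF)"
    using wh_le[OF G0, of F] unfolding MF_def .
  have "ln (real_of_int MF) \<le> ln (real_of_int (Kup * m^4))" using MF0 MFup by (rule ln_mono_int)
  also have "\<dots> = ln (real_of_int Kup) + 4 * ln (real_of_int m)"
    using Kup1 m1 by (subst ln_int_mult) (auto simp: ln_int_pow simp del: of_int_power)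
  finally have up: "weil_height_rat (of_int F / of_int G) \<le> ln (real_of_int Kup) + 4 * ln (real_of_int m)"
    using hs_le by linarith
  define f1 where "f1 = 0 * p^3 + 12 * p^2 * q + 0 * p * q^2 + 16*a * q^3"
  define g1 where "g1 = 3 * p^3 + 0 * p^2 * q + (-5*a) * p * q^2 + (-27*b) * q^3"
  define f2 where "f2 = 4*(4*a^3+27*b^2) * p^3 + (-4*a^2*b) * p^2 * q + (4*a*(3*a^3+22*b^2)) * p * q^2 + (12*b*(a^3+8*b^2)) * q^3"
  define g2 where "g2 = (a^2*b) * p^3 + (a*(5*a^3+32*b^2)) * p^2 * q + (2*b*(13*a^3+96*b^2)) * p * q^2 + (-3*a^2*(a^3+8*b^2)) * q^3"
  define R where "R = 4 * (4*a^3 + 27*b^2)"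
  have R0: "R \<noteq> 0" using Delta unfolding R_def by simp
  have i1: "f1 * F - g1 * G = R * q^7" unfolding f1_def g1_def F_def G_def R_def by (rule ident1)
  have i2: "f2 * F + g2 * G = R * p^7" unfolding f2_def g2_def F_def G_def R_def by (rule ident2)
  have bf1: "\<bar>f1\<bar> \<le> (\<bar>0\<bar>+\<bar>12\<bar>+\<bar>0\<bar>+\<bar>16*a\<bar>) * m^3" unfolding f1_def by (rule cubic_bound[OF m1(2,3)])
  have bg1: "\<bar>g1\<bar> \<le> (\<bar>3\<bar>+\<bar>0\<bar>+\<bar>-5*a\<bar>+\<bar>-27*b\<bar>) * m^3" unfolding g1_def by (rule cubic_bound[OF m1(2,3)])
  have bf2: "\<bar>f2\<bar> \<le> (\<bar>4*(4*a^3+27*b^2)\<bar> + \<bar>-4*a^2*b\<bar> + \<bar>4*a*(3*a^3+22*b^2)\<bar> + \<bar>12*b*(a^3+8*b^2)\<bar>) * m^3"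
    unfolding f2_def by (rule cubic_bound[OF m1(2,3)])
  have bg2: "\<bar>g2\<bar> \<le> (\<bar>a^2*b\<bar> + \<bar>a*(5*a^3+32*b^2)\<bar> + \<bar>2*b*(13*a^3+96*b^2)\<bar> + \<bar>-3*a^2*(a^3+8*b^2)\<bar>) * m^3"
    unfolding g2_def by (rule cubic_bound[OF m1(2,3)])
  have FM: "\<bar>F\<bar> \<le> MF" "\<bar>G\<bar> \<le> MF" unfolding MF_def by auto
  have prodb: "\<bar>x * y\<bar> \<le> k * m^3 * MF" if "\<bar>x\<bar> \<le> k * m^3" "\<bar>y\<bar> \<le> MF" for x y k
  proof -
    have "\<bar>x * y\<bar> = \<bar>x\<bar> * \<bar>y\<bar>" by (simp add: abs_mult)
    also have "\<dots> \<le> (k * m^3) * MF" using that by (intro mult_mono) auto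
    finally show ?thesis .
  qed
  have Rq: "\<bar>R\<bar> * \<bar>q\<bar>^7 \<le> Klo * m^3 * MF"
  proof -
    have "\<bar>R\<bar> * \<bar>q\<bar>^7 = \<bar>f1 * F - g1 * G\<bar>" using i1 by (simp add: abs_mult power_abs)
    also have "\<dots> \<le> \<bar>f1 * F\<bar> + \<bar>g1 * G\<bar>" by (rule abs_triangle_ineq4)
    also have "\<dots> \<le> Klo * m^3 * MF"
    proof -
      define k1 where "k1 = \<bar>0\<bar>+\<bar>12\<bar>+\<bar>0\<bar>+\<bar>16*a\<bar>"
      define k2 where "k2 = \<bar>3\<bar>+\<bar>0\<bar>+\<bar>-5*a\<bar>+\<bar>-27*b::int\<bar>"
      have "k1 + k2 \<le> Klo" unfolding Klo k1_def k2_def by (simp add: add.assoc)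
      moreover have "0 \<le> m^3 * MF" using m1 MF0 by simp
      ultimately have "(k1 + k2) * (m^3 * MF) \<le> Klo * (m^3 * MF)" by (rule mult_right_mono)
      then show ?thesis using prodb[OF bf1 FM(1)] prodb[OF bg1 FM(2)] unfolding k1_def[symmetric] k2_def[symmetric]
        by (simp add: algebra_simps)
    qed
    finally show ?thesis .
  qed
  have Rp: "\<bar>R\<bar> * \<bar>p\<bar>^7 \<le> Klo * m^3 * MF"
  proof -
    have "\<bar>R\<bar> * \<bar>p\<bar>^7 = \<bar>f2 * F + g2 * G\<bar>" using i2 by (simp add: abs_mult power_abs)
    also have "\<dots> \<le> \<bar>f2 * F\<bar> + \<bar>g2 * G\<bar>" by (rule abs_triangle_ineq)
    also have "\<dots> \<le> Klo * m^3 * MF"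
    proof -
      define k1 where "k1 = \<bar>4*(4*a^3+27*b^2)\<bar> + \<bar>-4*a^2*b\<bar> + \<bar>4*a*(3*a^3+22*b^2)\<bar> + \<bar>12*b*(a^3+8*b^2)\<bar>"
      define k2 where "k2 = \<bar>a^2*b\<bar> + \<bar>a*(5*a^3+32*b^2)\<bar> + \<bar>2*b*(13*a^3+96*b^2)\<bar> + \<bar>-3*a^2*(a^3+8*b^2)\<bar>"
      have "k1 + k2 \<le> Klo" unfolding Klo k1_def k2_def by (simp add: add.assoc)
      moreover have "0 \<le> m^3 * MF" using m1 MF0 by simp
      ultimately have "(k1 + k2) * (m^3 * MF) \<le> Klo * (m^3 * MF)" by (rule mult_right_mono)
      then show ?thesis using prodb[OF bf2 FM(1)] prodb[OF bg2 FM(2)] unfolding k1_def[symmetric] k2_def[symmetric]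
        by (simp add: algebra_simps)
    qed
    finally show ?thesis .
  qed
  have "\<bar>R\<bar> * m^7 \<le> Klo * m^3 * MF"
  proof (cases "\<bar>p\<bar> \<le> q")
    case True then have "m = \<bar>q\<bar>" unfolding m_def using q by auto
    then show ?thesis using Rq by simp
  next
    case False then have "m = \<bar>p\<bar>" unfolding m_def by auto
    then show ?thesis using Rp by simp
  qed
  then have "m^3 * (\<bar>R\<bar> * m^4) \<le> m^3 * (Klo * MF)" by (simp add: algebra_simps power_add[symmetric])
  then have low1: "\<bar>R\<bar> * m^4 \<le> Klo * MF" using m1 by (simp add: mult_le_cancel_left_pos)
  have "gcd F G dvd R * q^7" using i1 by (metis dvd_diff dvd_mult gcd_dvd1 gcd_dvd2)
  moreover have "gcd F G dvd R * p^7" using i2 by (metis dvd_add dvd_mult gcd_dvd1 gcd_dvd2)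
  ultimately have "gcd F G dvd gcd (R * q^7) (R * p^7)" by simp
  also have "gcd (R * q^7) (R * p^7) = \<bar>R\<bar>"
    using cop by (simp add: gcd_mult_left coprime_commute)
  finally have gR: "gcd F G \<le> \<bar>R\<bar>" using R0 by (intro zdvd_imp_le) auto
  have gpos: "gcd F G > 0" using G0 by simp
  have "weil_height_rat (of_int F / of_int G) = ln (real_of_int MF) - ln (real_of_int (gcd F G))"
    using wh_gcd[OF G0, of F] unfolding MF_def .
  moreover have "ln (real_of_int (gcd F G)) \<le> ln (real_of_int \<bar>R\<bar>)" using gpos gR by (rule ln_mono_int)
  moreover have "ln (real_of_int (\<bar>R\<bar> * m^4)) \<le> ln (real_of_int (Klo * MF))"
    using low1 R0 m1 by (intro ln_mono_int) auto
  moreover have "ln (real_of_int (\<bar>R\<bar> * m^4)) = ln (real_of_int \<bar>R\<bar>) + 4 * ln (real_of_int m)"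
    using R0 m1 by (subst ln_int_mult) (auto simp: ln_int_pow simp del: of_int_power of_int_abs)
  moreover have "ln (real_of_int (Klo * MF)) = ln (real_of_int Klo) + ln (real_of_int MF)"
    using Klo1 MF0 by (intro ln_int_mult) auto
  ultimately have low: "weil_height_rat (of_int F / of_int G) \<ge> 4 * ln (real_of_int m) - ln (real_of_int Klo)"
    by linarith
  have "ln (real_of_int Kup) \<ge> 0" "ln (real_of_int Klo) \<ge> 0" using Kup1 Klo1 by auto
  then show ?thesis using up low unfolding m_def by linarith
qed

lemma dbl_bound:
  fixes a b :: int
  assumes Delta: "4*a^3 + 27*b^2 \<noteq> 0"
  shows "\<exists>C\<ge>0. \<forall>r. (case x_double (of_int a) (of_int b) r of
            None \<Rightarrow> 4 * weil_height_rat r \<le> C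
          | Some s \<Rightarrow> \<bar>weil_height_rat s - 4 * weil_height_rat r\<bar> \<le> C)"
proof -
  define Kup :: int where "Kup = (\<bar>1\<bar>+\<bar>0\<bar>+\<bar>-2*a\<bar>+\<bar>-8*b\<bar>+\<bar>a^2\<bar>) + (\<bar>0\<bar>+\<bar>4\<bar>+\<bar>0\<bar>+\<bar>4*a\<bar>+\<bar>4*b\<bar>)"
  define Klo :: int where "Klo = (\<bar>0\<bar>+\<bar>12\<bar>+\<bar>0\<bar>+\<bar>16*a\<bar>) + (\<bar>3\<bar>+\<bar>0\<bar>+\<bar>-5*a\<bar>+\<bar>-27*b\<bar>)
       + (\<bar>4*(4*a^3+27*b^2)\<bar> + \<bar>-4*a^2*b\<bar> + \<bar>4*a*(3*a^3+22*b^2)\<bar> + \<bar>12*b*(a^3+8*b^2)\<bar>)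
       + (\<bar>a^2*b\<bar> + \<bar>a*(5*a^3+32*b^2)\<bar> + \<bar>2*b*(13*a^3+96*b^2)\<bar> + \<bar>-3*a^2*(a^3+8*b^2)\<bar>) + 1"
  define Kr :: int where "Kr = \<bar>a\<bar> + \<bar>b\<bar> + 1"
  define C where "C = ln (real_of_int Kup) + ln (real_of_int Klo) + 4 * ln (real_of_int Kr)"
  have Kup1: "Kup \<ge> 1" unfolding Kup_def by simp
  have Klo1: "Klo \<ge> 1" unfolding Klo_def by simp
  have Kr1: "Kr \<ge> 1" unfolding Kr_def by simp
  have lnK: "ln (real_of_int Kup) \<ge> 0" "ln (real_of_int Klo) \<ge> 0" "ln (real_of_int Kr) \<ge> 0"
    using Kup1 Klo1 Kr1 by auto
  have C0: "C \<ge> 0" unfolding C_def using lnK by linarith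
  have "\<forall>r. (case x_double (of_int a) (of_int b) r of
            None \<Rightarrow> 4 * weil_height_rat r \<le> C
          | Some s \<Rightarrow> \<bar>weil_height_rat s - 4 * weil_height_rat r\<bar> \<le> C)"
  proof
    fix r :: rat
    obtain p q where pq: "quotient_of r = (p, q)" by (cases "quotient_of r") auto
    have q: "q > 0" using quotient_of_denom_pos[OF pq] .
    have cop: "coprime p q" using quotient_of_coprime[OF pq] .
    have r: "r = of_int p / of_int q" using quotient_of_div[OF pq] .
    have hr: "weil_height_rat r = ln (real_of_int (max \<bar>p\<bar> q))" using wh_quot[OF pq] .
    define Y where "Y = p^3 + a*p*q^2 + b*q^3"
    have qr: "(of_int q :: rat) \<noteq> 0" using q by simp
    have hD: "r^3 + of_int a * r + of_int b = of_int Y / of_int q^3"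
      unfolding r Y_def using qr by (simp add: field_simps power3_eq_cube power2_eq_square)
    show "case x_double (of_int a) (of_int b) r of
            None \<Rightarrow> 4 * weil_height_rat r \<le> C
          | Some s \<Rightarrow> \<bar>weil_height_rat s - 4 * weil_height_rat r\<bar> \<le> C"
    proof (cases "Y = 0")
      case True
      have xd: "x_double (of_int a) (of_int b) r = None" unfolding x_double_def hD True by simp
      have "max \<bar>p\<bar> q \<le> Kr" unfolding Kr_def using root_case[OF q cop] True unfolding Y_def by blast
      then have "ln (real_of_int (max \<bar>p\<bar> q)) \<le> ln (real_of_int Kr)"
        using q by (intro ln_mono_int) (auto simp: less_max_iff_disj)
      then show ?thesis unfolding xd using hr lnK unfolding C_def by simp
    next
      case False
      define F where "F \<equiv> 1 * p^4 + 0 * p^3 * q + (-2*a) * p^2 * q^2 + (-8*b) * p * q^3 + a^2 * q^4"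
      define G where "G \<equiv> 0 * p^4 + 4 * p^3 * q + 0 * p^2 * q^2 + (4*a) * p * q^3 + (4*b) * q^4"
      have GY: "G = 4 * q * Y" unfolding G_def Y_def by (simp add: algebra_simps power2_eq_square power3_eq_cube power4_eq_xxxx)
      have hN: "r^4 - 2 * of_int a * r^2 - 8 * of_int b * r + (of_int a)^2 = of_int F / of_int q^4"
        unfolding r F_def using qr by (simp add: field_simps power4_eq_xxxx power3_eq_cube power2_eq_square)
      have Yr: "(of_int Y :: rat) \<noteq> 0" using False by simp
      have "(of_int F / of_int q^4) / (4 * (of_int Y / of_int q^3)) = (of_int F / (4 * of_int q * of_int Y) :: rat)"
        using qr Yr by (simp add: field_simps power4_eq_xxxx power3_eq_cube)
      also have "\<dots> = of_int F / of_int G" unfolding GY by simp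
      finally have xd: "x_double (of_int a) (of_int b) r = Some (of_int F / of_int G)"
        unfolding x_double_def hD hN[symmetric] using Yr qr by simp
      have "\<bar>weil_height_rat (of_int F / of_int G) - 4 * ln (real_of_int (max \<bar>p\<bar> q))\<bar>
          \<le> ln (real_of_int Kup) + ln (real_of_int Klo)"
        unfolding F_def G_def
        by (rule some_case[OF Delta q cop False[unfolded Y_def] Kup_def Klo_def])
      then show ?thesis unfolding xd using hr lnK unfolding C_def by simp
    qed
  qed
  then show ?thesis using C0 by blast
qed

lemma seq_bound:
  fixes a b :: int
  assumes Delta: "4*a^3 + 27*b^2 \<noteq> 0"
  shows "\<exists>C\<ge>0. \<forall>r0 n. \<bar>height_opt (x_iter (of_int a) (of_int b) (Suc n) r0)
                  - 4 * height_opt (x_iter (of_int a) (of_int b) n r0)\<bar> \<le> C"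
proof -
  obtain C where C0: "C \<ge> 0" and C: "\<And>r. (case x_double (of_int a) (of_int b) r of
            None \<Rightarrow> 4 * weil_height_rat r \<le> C
          | Some s \<Rightarrow> \<bar>weil_height_rat s - 4 * weil_height_rat r\<bar> \<le> C)"
    using dbl_bound[OF Delta] by blast
  have "\<bar>height_opt (x_iter (of_int a) (of_int b) (Suc n) r0)
                  - 4 * height_opt (x_iter (of_int a) (of_int b) n r0)\<bar> \<le> C" for r0 n
  proof (cases "x_iter (of_int a) (of_int b) n r0")
    case None then show ?thesis using C0 by (simp add: height_opt_def)
  next
    case (Some r)
    note rS = Some
    show ?thesis
    proof (cases "x_double (of_int a) (of_int b) r")
      case None
      then show ?thesis using C[of r] rS wh_nonneg[of r] by (simp add: height_opt_def)
    next
      case (Some s)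
      then show ?thesis using C[of r] rS by (simp add: height_opt_def)
    qed
  qed
  then show ?thesis using C0 by blast
qed

lemma ch_bound:
  fixes a b :: int
  assumes Delta: "4*a^3 + 27*b^2 \<noteq> 0"
  shows "\<exists>C\<ge>0. \<forall>D x::int. D > 0 \<longrightarrow>
     canonical_height (of_int (D^2*a)) (of_int (D^3*b)) (of_int x) \<le> weil_height_rat (of_int x / of_int D) + C/3"
proof -
  obtain C where C0: "C \<ge> 0" and C: "\<And>r0 n. \<bar>height_opt (x_iter (of_int a) (of_int b) (Suc n) r0)
                  - 4 * height_opt (x_iter (of_int a) (of_int b) n r0)\<bar> \<le> C"
    using seq_bound[OF Delta] by blast
  have "canonical_height (of_int (D^2*a)) (of_int (D^3*b)) (of_int x) \<le> weil_height_rat (of_int x / of_int D) + C/3"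
    if D: "D > 0" for D x :: int
  proof -
    define r0 :: rat where "r0 = of_int x / of_int D"
    define H where "H n = height_opt (x_iter (of_int a) (of_int b) n r0)" for n
    obtain L where L: "(\<lambda>n. H n / 4^n) \<longlonglongrightarrow> L" and Lle: "L \<le> H 0 + C/3"
      using tate_limit[of H C] C unfolding H_def by blast
    have H0: "H 0 = weil_height_rat r0" unfolding H_def by (simp add: height_opt_def)
    define T where "T n = height_opt (x_iter (of_int (D^2*a)) (of_int (D^3*b)) n (of_int x))" for n
    have Dr: "(of_int D :: rat) \<noteq> 0" using D by simp
    have xr: "(of_int x :: rat) = of_int D * r0" unfolding r0_def using Dr by simp
    have Tmap: "x_iter (of_int (D^2*a)) (of_int (D^3*b)) n (of_int x) = map_option ((*) (of_int D)) (x_iter (of_int a) (of_int b) n r0)" for n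
      unfolding xr using xi_scale[OF Dr, of "of_int a" "of_int b" n r0] by simp
    have TH: "\<bar>T n - H n\<bar> \<le> ln (real_of_int D)" for n
    proof (cases "x_iter (of_int a) (of_int b) n r0")
      case None
      then show ?thesis unfolding T_def H_def Tmap using D by (simp add: height_opt_def)
    next
      case (Some s)
      then show ?thesis unfolding T_def H_def Tmap using h_scale1[OF D, of s] h_scale2[OF D, of s]
        by (simp add: height_opt_def)
    qed
    have "(\<lambda>n. ln (real_of_int D) * (1/4)^n) \<longlonglongrightarrow> ln (real_of_int D) * 0"
      by (intro tendsto_mult tendsto_const LIMSEQ_power_zero) simp
    then have z: "(\<lambda>n. ln (real_of_int D) * (1/4)^n) \<longlonglongrightarrow> 0" by simp
    have "(\<lambda>n. T n / 4^n - H n / 4^n) \<longlonglongrightarrow> 0"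
    proof (rule tendsto_0_le[OF z, where K=1])
      have lD: "ln (real_of_int D) \<ge> 0" using D by simp
      show "\<forall>\<^sub>F n in sequentially. norm (T n / 4^n - H n / 4^n) \<le> norm (ln (real_of_int D) * (1/4)^n) * 1"
      proof (rule always_eventually, rule allI)
        fix n
        have "norm (T n / 4^n - H n / 4^n) = \<bar>T n - H n\<bar> / 4^n" by (simp add: diff_divide_distrib[symmetric])
        also have "\<dots> \<le> ln (real_of_int D) / 4^n" using TH[of n] by (simp add: divide_right_mono)
        finally show "norm (T n / 4^n - H n / 4^n) \<le> norm (ln (real_of_int D) * (1/4)^n) * 1" using lD by (simp add: power_divide)
      qed
    qed
    then have "(\<lambda>n. (T n / 4^n - H n / 4^n) + H n / 4^n) \<longlonglongrightarrow> 0 + L" by (intro tendsto_add L)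
    then have "(\<lambda>n. T n / 4^n) \<longlonglongrightarrow> L" by simp
    then have "canonical_height (of_int (D^2*a)) (of_int (D^3*b)) (of_int x) = L"
      unfolding canonical_height_def T_def by (rule limI)
    then show ?thesis using Lle H0 unfolding r0_def by simp
  qed
  then show ?thesis using C0 by blast
qed

lemma neg_x_bound:
  fixes A B D t :: int
  assumes D: "D \<ge> 1" and t: "t \<ge> 1" and h: "t^3 \<le> D^2*\<bar>A\<bar>*t + D^3*\<bar>B\<bar>"
  shows "t \<le> (\<bar>A\<bar>+\<bar>B\<bar>+1)*D"
proof (rule ccontr)
  define K where "K = \<bar>A\<bar>+\<bar>B\<bar>+1"
  assume "\<not> t \<le> (\<bar>A\<bar>+\<bar>B\<bar>+1)*D"
  then have tK: "K * D < t" unfolding K_def by simp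
  have K1: "K \<ge> 1" unfolding K_def by simp
  have "D \<le> K * D" using K1 D by simp
  then have Dt: "D \<le> t" using tK by simp
  have "D^3*\<bar>B\<bar> = (D^2*\<bar>B\<bar>) * D" by (simp add: power3_eq_cube power2_eq_square)
  also have "\<dots> \<le> (D^2*\<bar>B\<bar>) * t" using Dt by (intro mult_left_mono) auto
  finally have "t * t^2 \<le> t * (D^2 * (\<bar>A\<bar>+\<bar>B\<bar>))" using h by (simp add: algebra_simps power3_eq_cube power2_eq_square)
  then have t2: "t^2 \<le> D^2 * (\<bar>A\<bar>+\<bar>B\<bar>)" using t by simp
  have "(K*D)^2 < t^2" using tK K1 D by (intro power_strict_mono) auto
  moreover have "D^2 * (\<bar>A\<bar>+\<bar>B\<bar>) \<le> D^2 * K^2"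
  proof -
    have "\<bar>A\<bar>+\<bar>B\<bar> \<le> K" unfolding K_def by simp
    also have "K \<le> K^2" using K1 by (simp add: power2_eq_square)
    finally show ?thesis by (intro mult_left_mono) auto
  qed
  ultimately show False using t2 by (simp add: power_mult_distrib algebra_simps)
qed

theorem lemma6p1:
  fixes A B M :: int
  assumes "4 * A^3 + 27 * B^2 \<noteq> 0"
    and "M > 0"
    and "max (10 * sqrt \<bar>real_of_int A\<bar>) (5 * root 3 \<bar>real_of_int B\<bar>) \<le> real_of_int M"
  shows "\<exists>D0 :: int. \<forall>D :: int. squarefree D \<and> D \<ge> D0 \<longrightarrow>
           (\<forall>x y :: int. y^2 = x^3 + D^2 * A * x + D^3 * B \<and> x \<le> M * D \<longrightarrow>
              canonical_height (of_int (D^2 * A)) (of_int (D^3 * B)) (of_int x)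
                < 1.5 * ln (real_of_int D))"
proof -
  obtain C where C0: "C \<ge> 0" and Cb: "\<And>D x::int. D > 0 \<Longrightarrow>
     canonical_height (of_int (D^2*A)) (of_int (D^3*B)) (of_int x) \<le> weil_height_rat (of_int x / of_int D) + C/3"
    using ch_bound[OF assms(1)] by blast
  define K where "K = max M (\<bar>A\<bar>+\<bar>B\<bar>+1)"
  have K1: "K \<ge> 1" unfolding K_def by simp
  define E where "E = exp (2 * (ln (real_of_int K) + C/3))"
  define D0 where "D0 = \<lceil>E\<rceil> + 1"
  show ?thesis
  proof (intro exI[of _ D0] allI impI)
    fix D :: int and x y :: int
    assume "squarefree D \<and> D \<ge> D0"
    then have DD0: "D \<ge> D0" by simp
    have "E \<le> real_of_int \<lceil>E\<rceil>" by (rule le_of_int_ceiling)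
    then have DE: "real_of_int D > E" using DD0 unfolding D0_def by linarith
    have E0: "E > 0" unfolding E_def by simp
    have Dpos: "D > 0" using DE E0 by linarith
    have "ln E < ln (real_of_int D)" using DE E0 by simp
    then have lnD: "2 * (ln (real_of_int K) + C/3) < ln (real_of_int D)" unfolding E_def by simp
    assume xy: "y^2 = x^3 + D^2 * A * x + D^3 * B \<and> x \<le> M * D"
    have xb: "\<bar>x\<bar> \<le> K * D"
    proof (cases "x \<ge> 0")
      case True
      have "M * D \<le> K * D" unfolding K_def using Dpos by (intro mult_right_mono) auto
      then show ?thesis using True xy by simp
    next
      case False
      define t where "t = -x"
      have t1: "t \<ge> 1" using False unfolding t_def by simp
      have "0 \<le> y^2" by simp
      then have "0 \<le> x^3 + D^2 * A * x + D^3 * B" using xy by simp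
      moreover have "x^3 = -(t^3)" unfolding t_def by simp
      moreover have "D^2 * A * x \<le> D^2 * \<bar>A\<bar> * t"
      proof -
        have "-A * t \<le> \<bar>A\<bar> * t" using t1 by (intro mult_right_mono) auto
        then have "D^2 * (-A * t) \<le> D^2 * (\<bar>A\<bar> * t)" by (intro mult_left_mono) auto
        then show ?thesis unfolding t_def by (simp add: algebra_simps)
      qed
      moreover have "D^3 * B \<le> D^3 * \<bar>B\<bar>" using Dpos by (intro mult_left_mono) auto
      ultimately have "t^3 \<le> D^2*\<bar>A\<bar>*t + D^3*\<bar>B\<bar>" by linarith
      then have "t \<le> (\<bar>A\<bar>+\<bar>B\<bar>+1)*D" using neg_x_bound[of D t A B] Dpos t1 by simp
      moreover have "(\<bar>A\<bar>+\<bar>B\<bar>+1)*D \<le> K * D" unfolding K_def using Dpos by (intro mult_right_mono) auto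
      ultimately show ?thesis using False unfolding t_def by simp
    qed
    have "max \<bar>x\<bar> \<bar>D\<bar> \<le> K * D" using xb K1 Dpos by (simp add: mult_le_cancel_right1)
    then have "ln (real_of_int (max \<bar>x\<bar> \<bar>D\<bar>)) \<le> ln (real_of_int (K * D))"
      using Dpos by (intro ln_mono_int) (auto simp: less_max_iff_disj)
    also have "\<dots> = ln (real_of_int K) + ln (real_of_int D)" using K1 Dpos by (intro ln_int_mult) auto
    finally have hx: "weil_height_rat (of_int x / of_int D) \<le> ln (real_of_int K) + ln (real_of_int D)"
      using wh_le[of D x] Dpos by simp
    show "canonical_height (of_int (D^2 * A)) (of_int (D^3 * B)) (of_int x) < 1.5 * ln (real_of_int D)"
      using Cb[OF Dpos, of x] hx lnD by simp
  qed
qed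

end
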